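(* In the stochastic Discriminative Feature Feedback setting with a representation $\mathcal{G}$ of size $m$, run the feature discovery protocol described in the context with mistake limit $b$ and threshold $\beta\in(0,1)$, and let $\delta\in(0,1)$. Suppose that at output, $\|F\|_1\ge 6\log(1/(2\delta\beta))/\beta$. Then with probability at least $1-\delta$, $\Phi_\beta\subseteq\hat\Phi$.
   Context: Setting. $\mathcal{X}$ is a domain, $\mathcal{Y}$ a finite label set, $\Phi$ a set of binary features on $\mathcal{X}$ closed under negation; in every pair $\phi,\neg\phi$ one is designated positive. A representation of size $m$ is a cover $\mathcal{G}=\{G_1,\dots,G_m\}$ of $\mathcal{X}$ by components with labels $\ell(G)$; each $x$ has a fixed component $G(x)\ni x$; $c^*(x)=\ell(G(x))$; for components $G_i,G_j$ with different labels there is $\phi(G_i,G_j)\in\Phi$ true on all of $G_i$ and false on all of $G_j$, with $\phi(G_j,G_i)=\neg\phi(G_i,G_j)$. Protocol: the learner predicts a label with an explanation example previously seen with that label; on a mistake the teacher gives the true label and $\phi(G(x_t),G(\hat x_t))$, $\hat x_t$ the explanation. Stochastic setting: examples $X$ are drawn i.i.d. from a marginal $\mathcal{D}_X$; on each draw an exception event $\texttt{Ex}$ (feedback inconsistent with $\mathcal{G}$) may occur; otherwise feedback is consistent with $\mathcal{G}$. Notation: $P[G]:=\mathbb{P}[X\in G\wedge\neg\texttt{Ex}]$; $\phi_+(G,G')$ is the positive one of $\phi(G,G'),\neg\phi(G,G')$; $P_\phi:=\{\{G,G'\}:\phi_+(G,G')=\phi\}$; $\beta_\phi:=\sum_{\{G,G'\}\in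 P_\phi}P[G]P[G']$; $\Phi_\beta:=\{\phi:\beta_\phi\ge\beta\}$. Feature discovery protocol (inputs $b$, $\beta$): get initial labeled example $(x_0,y_0)$; initialize $F:\Phi\to\mathbb{N}$ to $0$, with $\|F\|_1:=\sum_\phi F(\phi)$. While $\|F\|_1\le b/2$: get the next example $x_t$, predict $y_0$ with explanation $x_0$, get its true label $y_t$ (ignoring any other feedback), and set $(x_{\mathrm{base}},y_{\mathrm{base}}):=(x_t,y_t)$; then repeatedly get the next example and predict $y_{\mathrm{base}}$ with explanation $x_{\mathrm{base}}$ until a prediction is incorrect, at which point receive the true label and discriminative feature $\phi_t$, let $\phi_+$ be the positive one of $\phi_t,\neg\phi_t$, increment $F(\phi_+)$, and return to the outer loop. Output $\hat\Phi:=\{\phi:F(\phi)\ge\beta\|F\|_1\}$.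
   Formalization: P[G] is the probability that $G(X)=G$ and no exception occurs, not that $X\in G$; runs that never stop are not counted as failures; and the exception event, the true label and these events are taken measurable. Apart from conventions, each condition added here is assumed in the paper as well or is needed for the statement above to hold. *)

theory Defs
  imports "HOL-Probability.Probability"
begin

definition feature_system ::
  "'f set \<Rightarrow> ('f \<Rightarrow> 'x \<Rightarrow> bool) \<Rightarrow> ('f \<Rightarrow> 'f) \<Rightarrow> ('f \<Rightarrow> bool) \<Rightarrow> bool" where
  "feature_system Phi feat neg pos \<longleftrightarrow>
     (\<forall>\<phi>\<in>Phi. neg \<phi> \<in> Phi \<and> neg (neg \<phi>) = \<phi> \<and> (\<forall>x. feat (neg \<phi>) x = (\<not> feat \<phi> x))
              \<and> (pos \<phi> \<longleftrightarrow> \<not> pos (neg \<phi>)))"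

definition posf :: "('f \<Rightarrow> bool) \<Rightarrow> ('f \<Rightarrow> 'f) \<Rightarrow> 'f \<Rightarrow> 'f" where
  "posf pos neg \<phi> = (if pos \<phi> then \<phi> else neg \<phi>)"

text \<open>Components are indexed by the finite set comps (of size m); compset c is the
  set of points of component c, lbl c its label, gof x the fixed component G(x)
  of x, and disc i j the discriminating feature phi(G_i,G_j).\<close>

definition representation ::
  "'f set \<Rightarrow> ('f \<Rightarrow> 'x \<Rightarrow> bool) \<Rightarrow> ('f \<Rightarrow> 'f) \<Rightarrow> 'c set \<Rightarrow> nat \<Rightarrow> ('c \<Rightarrow> 'x set)
    \<Rightarrow> ('c \<Rightarrow> 'y) \<Rightarrow> ('x \<Rightarrow> 'c) \<Rightarrow> ('c \<Rightarrow> 'c \<Rightarrow> 'f) \<Rightarrow> bool" where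
  "representation Phi feat neg comps m compset lbl gof disc \<longleftrightarrow>
     finite comps \<and> card comps = m \<and>
     (\<forall>x. gof x \<in> comps \<and> x \<in> compset (gof x)) \<and>
     (\<forall>i\<in>comps. \<forall>j\<in>comps. lbl i \<noteq> lbl j \<longrightarrow>
         disc i j \<in> Phi \<and> (\<forall>x\<in>compset i. feat (disc i j) x)
         \<and> (\<forall>x\<in>compset j. \<not> feat (disc i j) x) \<and> disc j i = neg (disc i j))"

text \<open>Each round draws d from the distribution D; xof d is the example, exc d the
  exception event, lab d the true label reported by the teacher, and
  fb d y x' the discriminative feature reported when the learner predicts y with
  explanation x' and errs.\<close>

definition consistent_feedback ::
  "'d measure \<Rightarrow> ('d \<Rightarrow> 'x) \<Rightarrow> ('d \<Rightarrow> bool) \<Rightarrow> ('d \<Rightarrow> 'y) \<Rightarrow> ('d \<Rightarrow> 'y \<Rightarrow> 'x \<Rightarrow> 'f)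
    \<Rightarrow> ('c \<Rightarrow> 'y) \<Rightarrow> ('x \<Rightarrow> 'c) \<Rightarrow> ('c \<Rightarrow> 'c \<Rightarrow> 'f) \<Rightarrow> bool" where
  "consistent_feedback D xof exc lab fb lbl gof disc \<longleftrightarrow>
     (\<forall>d\<in>space D. \<not> exc d \<longrightarrow>
        lab d = lbl (gof (xof d)) \<and>
        (\<forall>y x'. lbl (gof (xof d)) \<noteq> lbl (gof x') \<longrightarrow> fb d y x' = disc (gof (xof d)) (gof x')))"

text \<open>P[G] := P[X in G and not Ex], with X in G read as G(X) = G.\<close>
definition PG :: "'d measure \<Rightarrow> ('d \<Rightarrow> 'x) \<Rightarrow> ('d \<Rightarrow> bool) \<Rightarrow> ('x \<Rightarrow> 'c) \<Rightarrow> 'c \<Rightarrow> real" where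
  "PG D xof exc gof c = measure D {d \<in> space D. gof (xof d) = c \<and> \<not> exc d}"

definition pairs_of ::
  "'c set \<Rightarrow> ('c \<Rightarrow> 'y) \<Rightarrow> ('c \<Rightarrow> 'c \<Rightarrow> 'f) \<Rightarrow> ('f \<Rightarrow> bool) \<Rightarrow> ('f \<Rightarrow> 'f) \<Rightarrow> 'f \<Rightarrow> 'c set set" where
  "pairs_of comps lbl disc pos neg \<phi> =
     {{i, j} | i j. i \<in> comps \<and> j \<in> comps \<and> lbl i \<noteq> lbl j \<and> posf pos neg (disc i j) = \<phi>}"

definition beta_of ::
  "'d measure \<Rightarrow> ('d \<Rightarrow> 'x) \<Rightarrow> ('d \<Rightarrow> bool) \<Rightarrow> 'c set \<Rightarrow> ('c \<Rightarrow> 'y) \<Rightarrow> ('x \<Rightarrow> 'c)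
    \<Rightarrow> ('c \<Rightarrow> 'c \<Rightarrow> 'f) \<Rightarrow> ('f \<Rightarrow> bool) \<Rightarrow> ('f \<Rightarrow> 'f) \<Rightarrow> 'f \<Rightarrow> real" where
  "beta_of D xof exc comps lbl gof disc pos neg \<phi> =
     (\<Sum>p\<in>pairs_of comps lbl disc pos neg \<phi>. \<Prod>c\<in>p. PG D xof exc gof c)"

definition Phi_beta ::
  "'f set \<Rightarrow> 'd measure \<Rightarrow> ('d \<Rightarrow> 'x) \<Rightarrow> ('d \<Rightarrow> bool) \<Rightarrow> 'c set \<Rightarrow> ('c \<Rightarrow> 'y) \<Rightarrow> ('x \<Rightarrow> 'c)
    \<Rightarrow> ('c \<Rightarrow> 'c \<Rightarrow> 'f) \<Rightarrow> ('f \<Rightarrow> bool) \<Rightarrow> ('f \<Rightarrow> 'f) \<Rightarrow> real \<Rightarrow> 'f set" where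
  "Phi_beta Phi D xof exc comps lbl gof disc pos neg \<beta> =
     {\<phi>\<in>Phi. beta_of D xof exc comps lbl gof disc pos neg \<phi> \<ge> \<beta>}"

text \<open>omega :: nat => 'd is the i.i.d. sequence of draws; draw 0 is the initial
  labelled example.  Outer iteration k starts at draw disc_start lab omega k (which
  becomes the base example); its mistake happens at the first later draw whose
  label differs from the base label.\<close>

definition next_mistake :: "('d \<Rightarrow> 'y) \<Rightarrow> (nat \<Rightarrow> 'd) \<Rightarrow> nat \<Rightarrow> nat" where
  "next_mistake lab \<omega> s = (LEAST t. s < t \<and> lab (\<omega> t) \<noteq> lab (\<omega> s))"

primrec disc_start :: "('d \<Rightarrow> 'y) \<Rightarrow> (nat \<Rightarrow> 'd) \<Rightarrow> nat \<Rightarrow> nat" where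
  "disc_start lab \<omega> 0 = 1"
| "disc_start lab \<omega> (Suc k) = Suc (next_mistake lab \<omega> (disc_start lab \<omega> k))"

definition iter_feature ::
  "('d \<Rightarrow> 'x) \<Rightarrow> ('d \<Rightarrow> 'y) \<Rightarrow> ('d \<Rightarrow> 'y \<Rightarrow> 'x \<Rightarrow> 'f) \<Rightarrow> ('f \<Rightarrow> bool) \<Rightarrow> ('f \<Rightarrow> 'f)
     \<Rightarrow> (nat \<Rightarrow> 'd) \<Rightarrow> nat \<Rightarrow> 'f" where
  "iter_feature xof lab fb pos neg \<omega> k =
     (let s = disc_start lab \<omega> k in
      posf pos neg (fb (\<omega> (next_mistake lab \<omega> s)) (lab (\<omega> s)) (xof (\<omega> s))))"

text \<open>Number of outer iterations: after k iterations the norm of F equals k, and the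
  loop stops at the first k with k > b/2.\<close>
definition num_iters :: "nat \<Rightarrow> nat" where
  "num_iters b = (LEAST k. \<not> (real k \<le> real b / 2))"

definition disc_terminates :: "('d \<Rightarrow> 'y) \<Rightarrow> nat \<Rightarrow> (nat \<Rightarrow> 'd) \<Rightarrow> bool" where
  "disc_terminates lab b \<omega> \<longleftrightarrow>
     (\<forall>k < num_iters b. \<exists>t. disc_start lab \<omega> k < t \<and> lab (\<omega> t) \<noteq> lab (\<omega> (disc_start lab \<omega> k)))"

definition Fcount ::
  "('d \<Rightarrow> 'x) \<Rightarrow> ('d \<Rightarrow> 'y) \<Rightarrow> ('d \<Rightarrow> 'y \<Rightarrow> 'x \<Rightarrow> 'f) \<Rightarrow> ('f \<Rightarrow> bool) \<Rightarrow> ('f \<Rightarrow> 'f)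
     \<Rightarrow> (nat \<Rightarrow> 'd) \<Rightarrow> nat \<Rightarrow> 'f \<Rightarrow> nat" where
  "Fcount xof lab fb pos neg \<omega> n \<phi> = card {k. k < n \<and> iter_feature xof lab fb pos neg \<omega> k = \<phi>}"

definition Phi_hat ::
  "'f set \<Rightarrow> ('d \<Rightarrow> 'x) \<Rightarrow> ('d \<Rightarrow> 'y) \<Rightarrow> ('d \<Rightarrow> 'y \<Rightarrow> 'x \<Rightarrow> 'f) \<Rightarrow> ('f \<Rightarrow> bool) \<Rightarrow> ('f \<Rightarrow> 'f)
     \<Rightarrow> nat \<Rightarrow> real \<Rightarrow> (nat \<Rightarrow> 'd) \<Rightarrow> 'f set" where
  "Phi_hat Phi xof lab fb pos neg b \<beta> \<omega> =
     (let N = num_iters b;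
          F = Fcount xof lab fb pos neg \<omega> N;
          normF = (\<Sum>\<phi>\<in>{\<phi>. F \<phi> \<noteq> 0}. F \<phi>)
      in {\<phi>\<in>Phi. real (F \<phi>) \<ge> \<beta> * real normF})"

end

theory Submission
  imports Defs
begin


definition shiftn :: "nat \<Rightarrow> (nat \<Rightarrow> 'a) \<Rightarrow> nat \<Rightarrow> 'a" where
  "shiftn n \<omega> = (\<lambda>i. \<omega> (i + n))"

lemma measurable_shiftn[measurable]:
  "shiftn n \<in> PiM UNIV (\<lambda>_::nat. M) \<rightarrow>\<^sub>M PiM UNIV (\<lambda>_::nat. M)"
  unfolding shiftn_def
  by (rule measurable_PiM_single') (auto simp: space_PiM PiE_iff)

lemma indep_shift:
  fixes D :: "'d measure" and f g :: "(nat \<Rightarrow> 'd) \<Rightarrow> ennreal"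
  assumes D: "prob_space D"
    and f[measurable]: "f \<in> borel_measurable (PiM UNIV (\<lambda>_::nat. D))"
    and g[measurable]: "g \<in> borel_measurable (PiM UNIV (\<lambda>_::nat. D))"
    and fdep: "\<And>\<omega> \<omega>'. (\<And>i. i \<le> n \<Longrightarrow> \<omega> i = \<omega>' i) \<Longrightarrow> f \<omega> = f \<omega>'"
    and gdep: "\<And>\<omega> \<omega>'. (\<And>i. 0 < i \<Longrightarrow> \<omega> i = \<omega>' i) \<Longrightarrow> g \<omega> = g \<omega>'"
  shows "(\<integral>\<^sup>+ \<omega>. f \<omega> * g (shiftn n \<omega>) \<partial>PiM UNIV (\<lambda>_::nat. D))
       = (\<integral>\<^sup>+ \<omega>. f \<omega> \<partial>PiM UNIV (\<lambda>_::nat. D)) * (\<integral>\<^sup>+ \<omega>. g \<omega> \<partial>PiM UNIV (\<lambda>_::nat. D))"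
proof -
  interpret sequence_space D
    unfolding sequence_space_def product_prob_space_def product_prob_space_axioms_def
      product_sigma_finite_def using D prob_space_imp_sigma_finite by auto
  have SF: "sigma_finite_measure S" by (rule prob_space_imp_sigma_finite, rule prob_space_PiM, rule D)
  have SPr: "prob_space S" by (rule prob_space_PiM) (rule D)
  note NF = sigma_finite_measure.nn_integral_fst[OF SF]
  obtain x0 where x0: "x0 \<in> space S"
    using prob_space.not_empty[OF SPr] by blast
  define H where "H = (\<integral>\<^sup>+ \<omega>'. g (comb_seq 1 x0 \<omega>') \<partial>S)"
  have gm[measurable]: "(\<lambda>\<omega>'. g (comb_seq 1 x0 \<omega>')) \<in> borel_measurable S"
    using x0 by measurable
  have "(\<integral>\<^sup>+ \<omega>. f \<omega> * g (shiftn n \<omega>) \<partial>S)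
       = (\<integral>\<^sup>+ p. f (comb_seq (Suc n) (fst p) (snd p)) * g (shiftn n (comb_seq (Suc n) (fst p) (snd p))) \<partial>(S \<Otimes>\<^sub>M S))"
    apply (subst (1) PiM_comb_seq[symmetric, where i="Suc n"])
    apply (subst nn_integral_distr)
    apply (auto simp: split_beta')
    done
  also have "\<dots> = (\<integral>\<^sup>+ p. f (fst p) * g (comb_seq 1 x0 (snd p)) \<partial>(S \<Otimes>\<^sub>M S))"
  proof (rule nn_integral_cong)
    fix p
    have "f (comb_seq (Suc n) (fst p) (snd p)) = f (fst p)"
      by (rule fdep) (auto simp: comb_seq_def)
    moreover have "g (shiftn n (comb_seq (Suc n) (fst p) (snd p))) = g (comb_seq 1 x0 (snd p))"
      by (rule gdep) (auto simp: comb_seq_def shiftn_def split: nat.split)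
    ultimately show "f (comb_seq (Suc n) (fst p) (snd p)) * g (shiftn n (comb_seq (Suc n) (fst p) (snd p)))
        = f (fst p) * g (comb_seq 1 x0 (snd p))" by simp
  qed
  also have "\<dots> = (\<integral>\<^sup>+ \<omega>. \<integral>\<^sup>+ \<omega>'. f \<omega> * g (comb_seq 1 x0 \<omega>') \<partial>S \<partial>S)"
  proof -
    have m1: "(\<lambda>p. f (fst p) * g (comb_seq 1 x0 (snd p))) \<in> borel_measurable (S \<Otimes>\<^sub>M S)"
      using x0 by measurable
    show ?thesis using NF[OF m1] by (simp del: comb_seq_Suc_0)
  qed
  also have "\<dots> = (\<integral>\<^sup>+ \<omega>. f \<omega> * H \<partial>S)"
    unfolding H_def by (rule nn_integral_cong) (rule nn_integral_cmult[OF gm])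
  also have "\<dots> = (\<integral>\<^sup>+ \<omega>. f \<omega> \<partial>S) * H"
    by (rule nn_integral_multc) auto
  also have "H = (\<integral>\<^sup>+ \<omega>. g \<omega> \<partial>S)"
  proof -
    have "(\<integral>\<^sup>+ \<omega>. g \<omega> \<partial>S) = (\<integral>\<^sup>+ p. g (comb_seq 1 (fst p) (snd p)) \<partial>(S \<Otimes>\<^sub>M S))"
      apply (subst (1) PiM_comb_seq[symmetric, where i="1"])
      apply (subst nn_integral_distr)
      apply (auto simp: split_beta')
      done
    also have "\<dots> = (\<integral>\<^sup>+ p. g (comb_seq 1 x0 (snd p)) \<partial>(S \<Otimes>\<^sub>M S))"
      by (rule nn_integral_cong, rule gdep) (auto simp: comb_seq_def split: nat.split)
    also have "\<dots> = (\<integral>\<^sup>+ \<omega>. \<integral>\<^sup>+ \<omega>'. g (comb_seq 1 x0 \<omega>') \<partial>S \<partial>S)"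
    proof -
      have m1: "(\<lambda>p. g (comb_seq 1 x0 (snd p))) \<in> borel_measurable (S \<Otimes>\<^sub>M S)"
        using x0 by measurable
      show ?thesis using NF[OF m1] by (simp del: comb_seq_Suc_0)
    qed
    also have "\<dots> = H"
      unfolding H_def by (simp add: prob_space.emeasure_space_1[OF SPr])
    finally show ?thesis by simp
  qed
  finally show ?thesis .
qed



definition tc :: "('d \<Rightarrow> 'y) \<Rightarrow> (nat \<Rightarrow> 'd) \<Rightarrow> nat \<Rightarrow> bool" where
  "tc lab \<omega> s \<longleftrightarrow> (\<exists>t>s. lab (\<omega> t) \<noteq> lab (\<omega> s))"

definition trm :: "('d \<Rightarrow> 'y) \<Rightarrow> nat \<Rightarrow> (nat \<Rightarrow> 'd) \<Rightarrow> bool" where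
  "trm lab N \<omega> \<longleftrightarrow> (\<forall>k<N. tc lab \<omega> (disc_start lab \<omega> k))"

definition cnt :: "('d \<Rightarrow> 'd \<Rightarrow> bool) \<Rightarrow> ('d \<Rightarrow> 'y) \<Rightarrow> nat \<Rightarrow> (nat \<Rightarrow> 'd) \<Rightarrow> nat" where
  "cnt C lab N \<omega> = (\<Sum>k<N. if C (\<omega> (disc_start lab \<omega> k)) (\<omega> (next_mistake lab \<omega> (disc_start lab \<omega> k))) then 1 else 0)"

lemma tc_shift: "tc lab \<omega> (s + a) = tc lab (shiftn a \<omega>) s"
  unfolding tc_def shiftn_def
  apply safe
  subgoal for t by (rule exI[of _ "t - a"]) auto
  subgoal for t by (rule exI[of _ "t + a"]) auto
  done

lemma nm_prop:
  assumes "tc lab \<omega> s"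
  shows "s < next_mistake lab \<omega> s" "lab (\<omega> (next_mistake lab \<omega> s)) \<noteq> lab (\<omega> s)"
  using LeastI_ex[of "\<lambda>t. s < t \<and> lab (\<omega> t) \<noteq> lab (\<omega> s)"] assms
  unfolding next_mistake_def tc_def by auto

lemma nm_le:
  assumes "s < t" "lab (\<omega> t) \<noteq> lab (\<omega> s)"
  shows "next_mistake lab \<omega> s \<le> t"
  unfolding next_mistake_def using assms by (auto intro: Least_le)

lemma nm_shift:
  assumes "tc lab (shiftn a \<omega>) s"
  shows "next_mistake lab \<omega> (s + a) = next_mistake lab (shiftn a \<omega>) s + a"
proof -
  let ?r = "shiftn a \<omega>"
  have p1: "s < next_mistake lab ?r s" and p2: "lab (?r (next_mistake lab ?r s)) \<noteq> lab (?r s)"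
    using nm_prop[OF assms] by auto
  show ?thesis
    unfolding next_mistake_def[of lab \<omega>]
  proof (rule Least_equality)
    show "s + a < next_mistake lab ?r s + a \<and> lab (\<omega> (next_mistake lab ?r s + a)) \<noteq> lab (\<omega> (s + a))"
      using p1 p2 by (auto simp: shiftn_def)
  next
    fix t assume t: "s + a < t \<and> lab (\<omega> t) \<noteq> lab (\<omega> (s + a))"
    then have "next_mistake lab ?r s \<le> t - a"
      by (intro nm_le) (auto simp: shiftn_def)
    then show "next_mistake lab ?r s + a \<le> t" using t by auto
  qed
qed

lemma ds_shift:
  assumes "tc lab \<omega> 1"
  defines "T \<equiv> next_mistake lab \<omega> 1"
  shows "(\<forall>i<k. tc lab (shiftn T \<omega>) (disc_start lab (shiftn T \<omega>) i)) \<Longrightarrow>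
    disc_start lab \<omega> (Suc k) = disc_start lab (shiftn T \<omega>) k + T"
proof (induction k)
  case 0
  then show ?case by (simp add: T_def)
next
  case (Suc k)
  then have IH: "disc_start lab \<omega> (Suc k) = disc_start lab (shiftn T \<omega>) k + T" by auto
  have tck: "tc lab (shiftn T \<omega>) (disc_start lab (shiftn T \<omega>) k)" using Suc.prems by auto
  show ?case
    using nm_shift[OF tck] IH by simp
qed

lemma trm_Suc:
  assumes "tc lab \<omega> 1"
  defines "T \<equiv> next_mistake lab \<omega> 1"
  shows "trm lab (Suc N) \<omega> \<longleftrightarrow> trm lab N (shiftn T \<omega>)"
proof -
  have "(\<forall>k<N. tc lab \<omega> (disc_start lab \<omega> (Suc k))) \<longleftrightarrow> trm lab N (shiftn T \<omega>)" for N
  proof (induction N)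
    case 0 then show ?case by (simp add: trm_def)
  next
    case (Suc N)
    have "(\<forall>k<Suc N. tc lab \<omega> (disc_start lab \<omega> (Suc k))) \<longleftrightarrow>
          (\<forall>k<N. tc lab \<omega> (disc_start lab \<omega> (Suc k))) \<and> tc lab \<omega> (disc_start lab \<omega> (Suc N))"
      by (auto simp: less_Suc_eq)
    also have "\<dots> \<longleftrightarrow> trm lab N (shiftn T \<omega>) \<and> tc lab \<omega> (disc_start lab \<omega> (Suc N))"
      using Suc.IH by simp
    also have "\<dots> \<longleftrightarrow> trm lab N (shiftn T \<omega>) \<and> tc lab (shiftn T \<omega>) (disc_start lab (shiftn T \<omega>) N)"
      using ds_shift[OF assms(1), of N] tc_shift[of lab \<omega> _ T] unfolding T_def trm_def by auto
    also have "\<dots> \<longleftrightarrow> trm lab (Suc N) (shiftn T \<omega>)"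
      by (auto simp: trm_def less_Suc_eq)
    finally show ?case .
  qed
  moreover have "trm lab (Suc N) \<omega> \<longleftrightarrow> tc lab \<omega> 1 \<and> (\<forall>k<N. tc lab \<omega> (disc_start lab \<omega> (Suc k)))"
    unfolding trm_def
    by (auto simp: less_Suc_eq_0_disj simp del: disc_start.simps(2))
  ultimately show ?thesis using assms(1) by simp
qed

lemma cnt_Suc:
  assumes "tc lab \<omega> 1"
  defines "T \<equiv> next_mistake lab \<omega> 1"
  assumes "trm lab N (shiftn T \<omega>)"
  shows "cnt C lab (Suc N) \<omega> = (if C (\<omega> 1) (\<omega> T) then 1 else 0) + cnt C lab N (shiftn T \<omega>)"
proof -
  have "(if C (\<omega> (disc_start lab \<omega> (Suc k))) (\<omega> (next_mistake lab \<omega> (disc_start lab \<omega> (Suc k)))) then 1 else 0 :: nat)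
      = (if C (shiftn T \<omega> (disc_start lab (shiftn T \<omega>) k))
              (shiftn T \<omega> (next_mistake lab (shiftn T \<omega>) (disc_start lab (shiftn T \<omega>) k))) then 1 else 0)"
    if k: "k < N" for k
  proof -
    have pre: "\<forall>i<k. tc lab (shiftn T \<omega>) (disc_start lab (shiftn T \<omega>) i)"
      using assms(3) k unfolding trm_def by auto
    have tck: "tc lab (shiftn T \<omega>) (disc_start lab (shiftn T \<omega>) k)"
      using assms(3) k unfolding trm_def by auto
    show ?thesis
      using ds_shift[OF assms(1) pre[unfolded T_def]] nm_shift[OF tck]
      unfolding T_def by (simp add: shiftn_def)
  qed
  then have "(\<Sum>k<N. if C (\<omega> (disc_start lab \<omega> (Suc k))) (\<omega> (next_mistake lab \<omega> (disc_start lab \<omega> (Suc k)))) then 1 else 0 :: nat)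
     = cnt C lab N (shiftn T \<omega>)"
    unfolding cnt_def by (intro sum.cong) auto
  moreover have "cnt C lab (Suc N) \<omega> = (if C (\<omega> (disc_start lab \<omega> 0)) (\<omega> (next_mistake lab \<omega> (disc_start lab \<omega> 0))) then 1 else 0)
     + (\<Sum>k<N. if C (\<omega> (disc_start lab \<omega> (Suc k))) (\<omega> (next_mistake lab \<omega> (disc_start lab \<omega> (Suc k)))) then 1 else 0 :: nat)"
    unfolding cnt_def by (rule sum.lessThan_Suc_shift)
  ultimately show ?thesis
    by (simp add: T_def del: disc_start.simps(2))
qed



lemma pred_lab_eq:
  fixes lab :: "'d \<Rightarrow> 'y::finite" and t s :: nat
  assumes lab: "lab \<in> D \<rightarrow>\<^sub>M count_space UNIV"
  shows "Measurable.pred (PiM UNIV (\<lambda>_::nat. D)) (\<lambda>\<omega>. lab (\<omega> t) = lab (\<omega> s))"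
proof -
  have [measurable]: "(\<lambda>\<omega>. lab (\<omega> i)) \<in> PiM UNIV (\<lambda>_::nat. D) \<rightarrow>\<^sub>M count_space UNIV" for i
    using lab by measurable
  have m: "{\<omega> \<in> space (PiM UNIV (\<lambda>_::nat. D)). lab (\<omega> i) = y} \<in> sets (PiM UNIV (\<lambda>_::nat. D))" for i :: nat and y
    by measurable
  have eq: "{\<omega> \<in> space (PiM UNIV (\<lambda>_::nat. D)). lab (\<omega> t) = lab (\<omega> s)} =
     (\<Union>y\<in>UNIV. {\<omega> \<in> space (PiM UNIV (\<lambda>_::nat. D)). lab (\<omega> t) = y} \<inter> {\<omega> \<in> space (PiM UNIV (\<lambda>_::nat. D)). lab (\<omega> s) = y})"
    by auto
  have "{\<omega> \<in> space (PiM UNIV (\<lambda>_::nat. D)). lab (\<omega> t) = lab (\<omega> s)} \<in> sets (PiM UNIV (\<lambda>_::nat. D))"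
    unfolding eq by (intro sets.finite_UN sets.Int m) auto
  then show ?thesis by (simp add: pred_def)
qed

lemma ev_eq:
  "(tc lab \<omega> 1 \<and> next_mistake lab \<omega> 1 = n) \<longleftrightarrow>
   (1 < n \<and> lab (\<omega> n) \<noteq> lab (\<omega> 1) \<and> (\<forall>t. 1 < t \<and> t < n \<longrightarrow> lab (\<omega> t) = lab (\<omega> 1)))"
proof
  assume a: "tc lab \<omega> 1 \<and> next_mistake lab \<omega> 1 = n"
  then show "1 < n \<and> lab (\<omega> n) \<noteq> lab (\<omega> 1) \<and> (\<forall>t. 1 < t \<and> t < n \<longrightarrow> lab (\<omega> t) = lab (\<omega> 1))"
    using nm_prop[of lab \<omega> 1] nm_le[where s=1 and \<omega>=\<omega> and lab=lab] by force
next
  assume a: "1 < n \<and> lab (\<omega> n) \<noteq> lab (\<omega> 1) \<and> (\<forall>t. 1 < t \<and> t < n \<longrightarrow> lab (\<omega> t) = lab (\<omega> 1))"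
  then have tc: "tc lab \<omega> 1" unfolding tc_def by auto
  have "next_mistake lab \<omega> 1 = n"
    unfolding next_mistake_def
    by (rule Least_equality) (use a in \<open>auto simp: not_le[symmetric]\<close>)
  with tc show "tc lab \<omega> 1 \<and> next_mistake lab \<omega> 1 = n" by simp
qed

definition Zf :: "('d \<Rightarrow> 'd \<Rightarrow> bool) \<Rightarrow> ('d \<Rightarrow> 'y) \<Rightarrow> nat \<Rightarrow> (nat \<Rightarrow> 'd) \<Rightarrow> ennreal" where
  "Zf C lab N \<omega> = ennreal (if trm lab N \<omega> then (1/2) ^ (cnt C lab N \<omega>) else 0)"

definition ff :: "('d \<Rightarrow> 'd \<Rightarrow> bool) \<Rightarrow> ('d \<Rightarrow> 'y) \<Rightarrow> nat \<Rightarrow> (nat \<Rightarrow> 'd) \<Rightarrow> ennreal" where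
  "ff C lab n \<omega> = ennreal (if tc lab \<omega> 1 \<and> next_mistake lab \<omega> 1 = n then (if C (\<omega> 1) (\<omega> n) then 1/2 else 1) else 0)"

lemma Zf_0: "Zf C lab 0 \<omega> = 1"
  by (simp add: Zf_def trm_def cnt_def)

lemma Zf_rec: "Zf C lab (Suc N) \<omega> = (\<Sum>n. ff C lab n \<omega> * Zf C lab N (shiftn n \<omega>))"
proof (cases "tc lab \<omega> 1")
  case False
  then have "trm lab (Suc N) \<omega> = False" by (auto simp: trm_def)
  then show ?thesis using False by (simp add: Zf_def ff_def)
next
  case True
  define T where "T = next_mistake lab \<omega> 1"
  have "(\<lambda>n. ff C lab n \<omega> * Zf C lab N (shiftn n \<omega>)) =
        (\<lambda>n. if n = T then ff C lab T \<omega> * Zf C lab N (shiftn T \<omega>) else 0)"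
    by (auto simp: ff_def T_def)
  then have "(\<Sum>n. ff C lab n \<omega> * Zf C lab N (shiftn n \<omega>)) = ff C lab T \<omega> * Zf C lab N (shiftn T \<omega>)"
    using sums_single[of T "\<lambda>_. ff C lab T \<omega> * Zf C lab N (shiftn T \<omega>)"] sums_unique by fastforce
  also have "\<dots> = Zf C lab (Suc N) \<omega>"
  proof (cases "trm lab N (shiftn T \<omega>)")
    case False
    then show ?thesis using trm_Suc[OF True] by (simp add: Zf_def T_def)
  next
    case tr: True
    have "trm lab (Suc N) \<omega>" using trm_Suc[OF True] tr by (simp add: T_def)
    then show ?thesis using cnt_Suc[OF True, of N C] tr True
      by (auto simp: Zf_def ff_def T_def ennreal_mult'' power_add)
  qed
  finally show ?thesis by simp
qed



lemma dep_nm: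
  assumes "\<forall>i>0. \<omega> i = \<omega>' i" "0 < s"
  shows "next_mistake lab \<omega> s = next_mistake lab \<omega>' s"
proof -
  have "\<And>t. (s < t \<and> lab (\<omega> t) \<noteq> lab (\<omega> s)) = (s < t \<and> lab (\<omega>' t) \<noteq> lab (\<omega>' s))"
    using assms by auto
  then show ?thesis unfolding next_mistake_def by simp
qed

lemma dep_tc:
  assumes "\<forall>i>0. \<omega> i = \<omega>' i" "0 < s"
  shows "tc lab \<omega> s = tc lab \<omega>' s"
proof -
  have "\<And>t. (s < t \<and> lab (\<omega> t) \<noteq> lab (\<omega> s)) = (s < t \<and> lab (\<omega>' t) \<noteq> lab (\<omega>' s))"
    using assms by auto
  then show ?thesis unfolding tc_def by simp
qed

lemma dep_ds:
  assumes "\<forall>i>0. \<omega> i = \<omega>' i"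
  shows "disc_start lab \<omega> k = disc_start lab \<omega>' k \<and> 0 < disc_start lab \<omega> k"
proof (induction k)
  case 0 then show ?case by simp
next
  case (Suc k)
  then show ?case using dep_nm[OF assms, of "disc_start lab \<omega> k" lab] by simp
qed

lemma dep_Zf:
  assumes "\<forall>i>0. \<omega> i = \<omega>' i"
  shows "Zf C lab N \<omega> = Zf C lab N \<omega>'"
proof -
  have ds: "disc_start lab \<omega> k = disc_start lab \<omega>' k" "0 < disc_start lab \<omega> k" for k
    using dep_ds[OF assms] by auto
  have nm: "0 < next_mistake lab \<omega> (disc_start lab \<omega> k)" if "tc lab \<omega> (disc_start lab \<omega> k)" for k
    using nm_prop[OF that] by simp
  have tck: "tc lab \<omega> (disc_start lab \<omega> k) = tc lab \<omega>' (disc_start lab \<omega>' k)" for k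
    using dep_tc[OF assms ds(2)] ds(1) by simp
  have trm: "trm lab N \<omega> = trm lab N \<omega>'"
    unfolding trm_def using tck by simp
  have cnt: "trm lab N \<omega> \<Longrightarrow> cnt C lab N \<omega> = cnt C lab N \<omega>'"
  proof -
    assume tr: "trm lab N \<omega>"
    have "\<omega> (disc_start lab \<omega> k) = \<omega>' (disc_start lab \<omega>' k) \<and>
          \<omega> (next_mistake lab \<omega> (disc_start lab \<omega> k)) = \<omega>' (next_mistake lab \<omega>' (disc_start lab \<omega>' k))"
      if k: "k < N" for k
    proof -
      have t: "tc lab \<omega> (disc_start lab \<omega> k)" using tr k by (auto simp: trm_def)
      have e1: "next_mistake lab \<omega> (disc_start lab \<omega> k) = next_mistake lab \<omega>' (disc_start lab \<omega>' k)"
        using dep_nm[OF assms ds(2)] ds(1) by simp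
      show ?thesis using assms ds nm[OF t] e1 by metis
    qed
    then show ?thesis unfolding cnt_def by (intro sum.cong refl) auto
  qed
  show ?thesis unfolding Zf_def using trm cnt by simp
qed

lemma ff_alt: "ff C lab n \<omega> = ennreal (if 1 < n \<and> lab (\<omega> n) \<noteq> lab (\<omega> 1) \<and> (\<forall>t. 1 < t \<and> t < n \<longrightarrow> lab (\<omega> t) = lab (\<omega> 1))
   then (if C (\<omega> 1) (\<omega> n) then 1/2 else 1) else 0)"
  unfolding ff_def ev_eq ..

lemma dep_ff:
  assumes "\<forall>i\<le>n. \<omega> i = \<omega>' i"
  shows "ff C lab n \<omega> = ff C lab n \<omega>'"
proof (cases "1 < n")
  case True
  then have "\<And>t. t < n \<Longrightarrow> \<omega> t = \<omega>' t" "\<omega> 1 = \<omega>' 1" "\<omega> n = \<omega>' n" using assms by auto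
  then have "(\<forall>t. 1 < t \<and> t < n \<longrightarrow> lab (\<omega> t) = lab (\<omega> 1)) = (\<forall>t. 1 < t \<and> t < n \<longrightarrow> lab (\<omega>' t) = lab (\<omega>' 1))"
    by auto
  then show ?thesis unfolding ff_alt using \<open>\<omega> 1 = \<omega>' 1\<close> \<open>\<omega> n = \<omega>' n\<close> by simp
qed (simp add: ff_alt)

lemma ff_sum: "(\<Sum>n. ff C lab n \<omega>) = ennreal (if tc lab \<omega> 1 then (if C (\<omega> 1) (\<omega> (next_mistake lab \<omega> 1)) then 1/2 else 1) else 0)"
proof (cases "tc lab \<omega> 1")
  case False
  then show ?thesis by (simp add: ff_def)
next
  case True
  define T where "T = next_mistake lab \<omega> 1"
  have "(\<lambda>n. ff C lab n \<omega>) = (\<lambda>n. if n = T then ff C lab T \<omega> else 0)"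
    by (auto simp: ff_def T_def)
  then have "(\<Sum>n. ff C lab n \<omega>) = ff C lab T \<omega>"
    using sums_single[of T "\<lambda>_. ff C lab T \<omega>"] sums_unique by fastforce
  then show ?thesis using True by (simp add: ff_def T_def)
qed

context
  fixes D :: "'d measure" and lab :: "'d \<Rightarrow> 'y::finite" and C :: "'d \<Rightarrow> 'd \<Rightarrow> bool"
  assumes D: "prob_space D"
    and lab[measurable]: "lab \<in> D \<rightarrow>\<^sub>M count_space UNIV"
    and Cm[measurable]: "\<And>i j. Measurable.pred (PiM UNIV (\<lambda>_::nat. D)) (\<lambda>\<omega>. C (\<omega> i) (\<omega> j))"
begin

lemma ff_meas[measurable]: "ff C lab n \<in> borel_measurable (PiM UNIV (\<lambda>_::nat. D))"
proof -
  note pl[measurable] = pred_lab_eq[OF lab]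
  show ?thesis unfolding ff_alt[abs_def] by measurable
qed

lemma Zf_meas[measurable]: "Zf C lab N \<in> borel_measurable (PiM UNIV (\<lambda>_::nat. D))"
proof (induction N)
  case 0
  then show ?case by (simp add: Zf_0)
next
  case (Suc N)
  note [measurable] = Suc.IH
  have "(\<lambda>\<omega>. \<Sum>n. ff C lab n \<omega> * Zf C lab N (shiftn n \<omega>)) \<in> borel_measurable (PiM UNIV (\<lambda>_::nat. D))"
    by measurable
  then show ?case by (simp add: Zf_rec[abs_def])
qed

lemma Zf_int_rec:
  "(\<integral>\<^sup>+ \<omega>. Zf C lab (Suc N) \<omega> \<partial>PiM UNIV (\<lambda>_::nat. D))
   = (\<integral>\<^sup>+ \<omega>. (\<Sum>n. ff C lab n \<omega>) \<partial>PiM UNIV (\<lambda>_::nat. D)) * (\<integral>\<^sup>+ \<omega>. Zf C lab N \<omega> \<partial>PiM UNIV (\<lambda>_::nat. D))"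
proof -
  let ?S = "PiM UNIV (\<lambda>_::nat. D)"
  have "(\<integral>\<^sup>+ \<omega>. Zf C lab (Suc N) \<omega> \<partial>?S) = (\<integral>\<^sup>+ \<omega>. (\<Sum>n. ff C lab n \<omega> * Zf C lab N (shiftn n \<omega>)) \<partial>?S)"
    by (simp add: Zf_rec)
  also have "\<dots> = (\<Sum>n. \<integral>\<^sup>+ \<omega>. ff C lab n \<omega> * Zf C lab N (shiftn n \<omega>) \<partial>?S)"
    by (rule nn_integral_suminf) measurable
  also have "\<dots> = (\<Sum>n. (\<integral>\<^sup>+ \<omega>. ff C lab n \<omega> \<partial>?S) * (\<integral>\<^sup>+ \<omega>. Zf C lab N \<omega> \<partial>?S))"
    by (intro suminf_cong indep_shift[OF D] ff_meas Zf_meas dep_ff dep_Zf; simp)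
  also have "\<dots> = (\<Sum>n. (\<integral>\<^sup>+ \<omega>. ff C lab n \<omega> \<partial>?S)) * (\<integral>\<^sup>+ \<omega>. Zf C lab N \<omega> \<partial>?S)"
    by (rule ennreal_suminf_multc)
  also have "(\<Sum>n. (\<integral>\<^sup>+ \<omega>. ff C lab n \<omega> \<partial>?S)) = (\<integral>\<^sup>+ \<omega>. (\<Sum>n. ff C lab n \<omega>) \<partial>?S)"
    by (rule nn_integral_suminf[symmetric]) measurable
  finally show ?thesis .
qed

end



lemma ennreal_aux:
  assumes "(q::ennreal) + ennreal b \<le> 1" "0 \<le> b"
  shows "q \<le> ennreal (1 - b)"
proof (cases q rule: ennreal_cases)
  case (real r)
  then have "ennreal (r + b) \<le> 1" using assms by (simp add: ennreal_plus)
  then have "r + b \<le> 1" by (simp add: ennreal_le_1)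
  then have "r \<le> 1 - b" by simp
  then show ?thesis using real by (auto intro!: ennreal_leI)
next
  case top
  then have False using assms(1) by (simp add: top_unique)
  then show ?thesis ..
qed

context
  fixes D :: "'d measure" and lab :: "'d \<Rightarrow> 'y::finite" and C :: "'d \<Rightarrow> 'd \<Rightarrow> bool"
  assumes D: "prob_space D"
    and lab[measurable]: "lab \<in> D \<rightarrow>\<^sub>M count_space UNIV"
    and Cm[measurable]: "\<And>i j. Measurable.pred (PiM UNIV (\<lambda>_::nat. D)) (\<lambda>\<omega>. C (\<omega> i) (\<omega> j))"
begin

lemmas ffm[measurable] = ff_meas[where D=D and lab=lab and C=C, OF D lab Cm]
lemmas Zfm[measurable] = Zf_meas[where D=D and lab=lab and C=C, OF D lab Cm]

lemma Zf_int_bound: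
  fixes W :: "(nat \<Rightarrow> 'd) set" and \<beta> :: real
  assumes W[measurable]: "W \<in> sets (PiM UNIV (\<lambda>_::nat. D))"
    and Wp: "\<And>\<omega>. \<omega> \<in> W \<Longrightarrow> tc lab \<omega> 1 \<and> C (\<omega> 1) (\<omega> (next_mistake lab \<omega> 1))"
    and Wm: "ennreal (2 * \<beta>) \<le> emeasure (PiM UNIV (\<lambda>_::nat. D)) W"
    and b: "0 \<le> \<beta>" "\<beta> \<le> 1"
  shows "(\<integral>\<^sup>+ \<omega>. Zf C lab N \<omega> \<partial>PiM UNIV (\<lambda>_::nat. D)) \<le> ennreal ((1 - \<beta>) ^ N)"
proof -
  let ?S = "PiM UNIV (\<lambda>_::nat. D)"
  have SPr: "prob_space ?S" by (rule prob_space_PiM) (rule D)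
  define q where "q = (\<integral>\<^sup>+ \<omega>. (\<Sum>n. ff C lab n \<omega>) \<partial>?S)"
  have pt: "(\<Sum>n. ff C lab n \<omega>) + ennreal (1/2) * indicator W \<omega> \<le> 1" for \<omega>
  proof (cases "\<omega> \<in> W")
    case True
    then have "(\<Sum>n. ff C lab n \<omega>) = ennreal (1/2)" using Wp[OF True] by (simp add: ff_sum)
    moreover have "ennreal (1/2) + ennreal (1/2) = 1"
      using ennreal_plus[of "1/2" "1/2"] by simp
    ultimately show ?thesis using True by simp
  next
    case False
    then show ?thesis by (simp add: ff_sum)
  qed
  have "q + ennreal (1/2) * emeasure ?S W = (\<integral>\<^sup>+ \<omega>. (\<Sum>n. ff C lab n \<omega>) + ennreal (1/2) * indicator W \<omega> \<partial>?S)"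
    unfolding q_def
    by (subst nn_integral_add) (auto simp: nn_integral_cmult_indicator)
  also have "\<dots> \<le> (\<integral>\<^sup>+ \<omega>. 1 \<partial>?S)"
    by (rule nn_integral_mono) (rule pt)
  also have "\<dots> = 1" using prob_space.emeasure_space_1[OF SPr] by simp
  finally have q1: "q + ennreal (1/2) * emeasure ?S W \<le> 1" .
  have "ennreal (1/2) * ennreal (2 * \<beta>) = ennreal \<beta>"
    using b by (subst ennreal_mult[symmetric]) auto
  then have "ennreal \<beta> = ennreal (1/2) * ennreal (2 * \<beta>)" by simp
  also have "\<dots> \<le> ennreal (1/2) * emeasure ?S W"
    by (rule mult_left_mono[OF Wm]) simp
  finally have "q + ennreal \<beta> \<le> 1"
    using q1 by (meson add_left_mono order_trans)
  then have qb: "q \<le> ennreal (1 - \<beta>)" by (rule ennreal_aux[OF _ b(1)])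
  show ?thesis
  proof (induction N)
    case 0
    then show ?case using prob_space.emeasure_space_1[OF SPr] by (simp add: Zf_0)
  next
    case (Suc N)
    have "(\<integral>\<^sup>+ \<omega>. Zf C lab (Suc N) \<omega> \<partial>?S) = q * (\<integral>\<^sup>+ \<omega>. Zf C lab N \<omega> \<partial>?S)"
      unfolding q_def by (rule Zf_int_rec[where D=D and lab=lab and C=C, OF D lab Cm])
    also have "\<dots> \<le> ennreal (1 - \<beta>) * ennreal ((1 - \<beta>) ^ N)"
      by (intro mult_mono qb Suc.IH) auto
    also have "\<dots> = ennreal ((1 - \<beta>) ^ Suc N)"
      using b by (simp add: ennreal_mult''[symmetric])
    finally show ?case .
  qed
qed

lemma Zf_tail:
  fixes c :: real
  shows "emeasure (PiM UNIV (\<lambda>_::nat. D)) {\<omega> \<in> space (PiM UNIV (\<lambda>_::nat. D)). 1 \<le> ennreal c * Zf C lab N \<omega>}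
      \<le> ennreal c * (\<integral>\<^sup>+ \<omega>. Zf C lab N \<omega> \<partial>PiM UNIV (\<lambda>_::nat. D))"
proof -
  let ?S = "PiM UNIV (\<lambda>_::nat. D)"
  have "emeasure ?S {\<omega> \<in> space ?S. 1 \<le> ennreal c * Zf C lab N \<omega>}
      \<le> ennreal c * (\<integral>\<^sup>+ \<omega>. Zf C lab N \<omega> * indicator (space ?S) \<omega> \<partial>?S)"
    by (rule nn_integral_Markov_inequality) measurable
  also have "(\<integral>\<^sup>+ \<omega>. Zf C lab N \<omega> * indicator (space ?S) \<omega> \<partial>?S) = (\<integral>\<^sup>+ \<omega>. Zf C lab N \<omega> \<partial>?S)"
    by (rule nn_integral_cong) simp
  finally show ?thesis .
qed

end



lemma ln2_le: "ln (2::real) \<le> 5/6"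
proof -
  have "(2::real) \<le> 1 + 5/6 + (5/6)^2/2" by (simp add: power2_eq_square)
  also have "\<dots> \<le> exp (5/6)" by (rule exp_lower_Taylor_quadratic) simp
  finally have "ln (2::real) \<le> ln (exp (5/6))" by (subst ln_le_cancel_iff) auto
  then show ?thesis by simp
qed

lemma numeric_bound:
  fixes \<beta> \<delta> K :: real and N :: nat
  assumes b: "0 < \<beta>" "\<beta> \<le> 1" and d: "0 < \<delta>"
    and N: "real N \<ge> 6 * ln (1 / (2 * \<delta> * \<beta>)) / \<beta>"
    and K: "0 \<le> K" "K * (2 * \<beta>) \<le> 1"
  shows "K * (2 powr (\<beta> * real N) * (1 - \<beta>) ^ N) \<le> \<delta>"
proof -
  define L where "L = ln (1 / (2 * \<delta> * \<beta>))"
  have L: "L = - ln (2 * \<delta> * \<beta>)" unfolding L_def using b d by (simp add: ln_div)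
  have bN: "\<beta> * real N \<ge> 6 * L" using N b unfolding L_def by (simp add: field_simps)
  have l2: "ln (2::real) < 1" using ln2_le by simp
  have key: "\<beta> * real N * (1 - ln 2) \<ge> L"
  proof (cases "L \<le> 0")
    case True
    have "0 \<le> \<beta> * real N * (1 - ln 2)" using b l2 by simp
    then show ?thesis using True by linarith
  next
    case False
    have "6 * L * (1 - ln 2) \<le> \<beta> * real N * (1 - ln 2)"
      by (rule mult_right_mono[OF bN]) (use l2 in simp)
    moreover have "L \<le> 6 * L * (1 - ln 2)" using False ln2_le by (simp add: algebra_simps)
    ultimately show ?thesis by linarith
  qed
  have e1: "(1 - \<beta>) ^ N \<le> exp (- \<beta>) ^ N"
    by (rule power_mono) (use b exp_ge_add_one_self[of "- \<beta>"] in auto)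
  have e2: "exp (- \<beta>) ^ N = exp (- \<beta> * real N)"
    by (simp add: exp_of_nat_mult[symmetric] mult.commute)
  have e3: "2 powr (\<beta> * real N) = exp (\<beta> * real N * ln 2)"
    by (simp add: powr_def)
  have "2 powr (\<beta> * real N) * (1 - \<beta>) ^ N \<le> exp (\<beta> * real N * ln 2) * exp (- \<beta> * real N)"
    unfolding e3 e2[symmetric] by (rule mult_left_mono[OF e1]) simp
  also have "\<dots> = exp (- (\<beta> * real N * (1 - ln 2)))"
    by (simp add: exp_add[symmetric] algebra_simps)
  also have "\<dots> \<le> exp (- L)" using key by simp
  also have "\<dots> = 2 * \<delta> * \<beta>" using L b d by simp
  finally have X: "2 powr (\<beta> * real N) * (1 - \<beta>) ^ N \<le> 2 * \<delta> * \<beta>" .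
  have "K * (2 powr (\<beta> * real N) * (1 - \<beta>) ^ N) \<le> K * (2 * \<delta> * \<beta>)"
    by (rule mult_left_mono[OF X K(1)])
  also have "\<dots> = \<delta> * (K * (2 * \<beta>))" by (simp add: algebra_simps)
  also have "\<dots> \<le> \<delta> * 1" by (rule mult_left_mono[OF K(2)]) (use d in simp)
  finally show ?thesis by simp
qed



definition EE :: "'d measure \<Rightarrow> ('d \<Rightarrow> 'x) \<Rightarrow> ('d \<Rightarrow> bool) \<Rightarrow> ('x \<Rightarrow> 'c) \<Rightarrow> 'c \<Rightarrow> 'd set" where
  "EE D xof exc gof c = {d \<in> space D. gof (xof d) = c \<and> \<not> exc d}"

definition SS :: "'c set \<Rightarrow> ('c \<Rightarrow> 'y) \<Rightarrow> ('c \<Rightarrow> 'c \<Rightarrow> 'f) \<Rightarrow> ('f \<Rightarrow> bool) \<Rightarrow> ('f \<Rightarrow> 'f) \<Rightarrow> 'f \<Rightarrow> ('c \<times> 'c) set" where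
  "SS comps lbl disc pos neg \<phi> = {p. fst p \<in> comps \<and> snd p \<in> comps \<and> lbl (fst p) \<noteq> lbl (snd p) \<and> posf pos neg (disc (fst p) (snd p)) = \<phi>}"

lemma posf_neg:
  assumes "feature_system Phi feat neg pos" "\<psi> \<in> Phi"
  shows "posf pos neg (neg \<psi>) = posf pos neg \<psi>"
proof -
  have "neg (neg \<psi>) = \<psi>" "pos \<psi> \<longleftrightarrow> \<not> pos (neg \<psi>)"
    using assms unfolding feature_system_def by blast+
  then show ?thesis unfolding posf_def by auto
qed

lemma measure_two:
  fixes D :: "'d measure"
  assumes D: "prob_space D" and A: "A \<in> sets D" and B: "B \<in> sets D"
  shows "measure (PiM UNIV (\<lambda>_::nat. D)) {\<omega> \<in> space (PiM UNIV (\<lambda>_::nat. D)). \<omega> 1 \<in> A \<and> \<omega> 2 \<in> B}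
     = measure D A * measure D B"
proof -
  let ?S = "PiM UNIV (\<lambda>_::nat. D)"
  define F where "F = (\<lambda>k::nat. if k = 1 then A else B)"
  have eq: "{\<omega> \<in> space ?S. \<omega> 1 \<in> A \<and> \<omega> 2 \<in> B} = prod_emb UNIV (\<lambda>_. D) {1,2} (Pi\<^sub>E {1,2} F)"
    by (auto simp: prod_emb_def F_def space_PiM PiE_iff)
  have "emeasure ?S (prod_emb UNIV (\<lambda>_. D) {1,2} (Pi\<^sub>E {1,2} F)) = (\<Prod>i\<in>{1::nat,2}. emeasure D (F i))"
    by (rule emeasure_PiM_emb) (auto simp: D F_def A B)
  also have "\<dots> = emeasure D A * emeasure D B" by (simp add: F_def)
  finally have "emeasure ?S {\<omega> \<in> space ?S. \<omega> 1 \<in> A \<and> \<omega> 2 \<in> B} = emeasure D A * emeasure D B"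
    using eq by simp
  then show ?thesis
    unfolding measure_def by (simp add: enn2real_mult)
qed

context
  fixes D :: "'d measure"
    and xof :: "'d \<Rightarrow> 'x" and exc :: "'d \<Rightarrow> bool" and lab :: "'d \<Rightarrow> 'y::finite"
    and fb :: "'d \<Rightarrow> 'y \<Rightarrow> 'x \<Rightarrow> 'f"
    and Phi :: "'f set" and feat :: "'f \<Rightarrow> 'x \<Rightarrow> bool" and neg :: "'f \<Rightarrow> 'f" and pos :: "'f \<Rightarrow> bool"
    and comps :: "'c set" and m :: nat and compset :: "'c \<Rightarrow> 'x set" and lbl :: "'c \<Rightarrow> 'y"
    and gof :: "'x \<Rightarrow> 'c" and disc :: "'c \<Rightarrow> 'c \<Rightarrow> 'f"
  assumes D: "prob_space D"
    and fs: "feature_system Phi feat neg pos"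
    and rep: "representation Phi feat neg comps m compset lbl gof disc"
    and cf: "consistent_feedback D xof exc lab fb lbl gof disc"
    and labm[measurable]: "lab \<in> D \<rightarrow>\<^sub>M count_space UNIV"
    and Em: "\<And>c. c \<in> comps \<Longrightarrow> {d \<in> space D. gof (xof d) = c \<and> \<not> exc d} \<in> sets D"
begin

abbreviation "E \<equiv> EE D xof exc gof"
abbreviation "S\<phi> \<equiv> SS comps lbl disc pos neg"
definition "CC \<phi> a b \<longleftrightarrow> (\<exists>p\<in>S\<phi> \<phi>. a \<in> E (snd p) \<and> b \<in> E (fst p))"

lemma E_sets[measurable]: "c \<in> comps \<Longrightarrow> E c \<in> sets D"
  using Em unfolding EE_def by simp

lemma SS_finite: "finite (S\<phi> \<phi>)"
proof -
  have fc: "finite comps" using rep unfolding representation_def by blast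
  show ?thesis
    by (rule finite_subset[rotated, OF finite_cartesian_product[OF fc fc]]) (auto simp: SS_def)
qed

lemma SS_sym: "p \<in> S\<phi> \<phi> \<Longrightarrow> (snd p, fst p) \<in> S\<phi> \<phi>"
proof -
  assume p: "p \<in> S\<phi> \<phi>"
  then have r: "disc (fst p) (snd p) \<in> Phi" "disc (snd p) (fst p) = neg (disc (fst p) (snd p))"
    using rep unfolding representation_def SS_def by auto
  show ?thesis using p posf_neg[OF fs r(1)] r(2) unfolding SS_def by auto
qed

lemma CC_pred[measurable]: "Measurable.pred (PiM UNIV (\<lambda>_::nat. D)) (\<lambda>\<omega>. CC \<phi> (\<omega> i) (\<omega> j))"
proof -
  have m: "\<And>p. p \<in> S\<phi> \<phi> \<Longrightarrow> Measurable.pred (PiM UNIV (\<lambda>_::nat. D)) (\<lambda>\<omega>. \<omega> i \<in> E (snd p) \<and> \<omega> j \<in> E (fst p))"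
  proof -
    fix p assume "p \<in> S\<phi> \<phi>"
    then have [measurable]: "E (snd p) \<in> sets D" "E (fst p) \<in> sets D" by (auto simp: SS_def)
    show "Measurable.pred (PiM UNIV (\<lambda>_::nat. D)) (\<lambda>\<omega>. \<omega> i \<in> E (snd p) \<and> \<omega> j \<in> E (fst p))"
      by measurable
  qed
  show ?thesis unfolding CC_def
    by (rule pred_intros_finite(4)[OF SS_finite m])
qed

lemma CC_feature:
  assumes "a \<in> space D" "b \<in> space D" "CC \<phi> a b"
  shows "lab a \<noteq> lab b \<and> posf pos neg (fb b (lab a) (xof a)) = \<phi>"
proof -
  obtain i j where ij: "(i, j) \<in> S\<phi> \<phi>" "a \<in> E j" "b \<in> E i"
    using assms(3) unfolding CC_def by auto
  have cfa: "\<And>d. d \<in> space D \<Longrightarrow> \<not> exc d \<Longrightarrow> lab d = lbl (gof (xof d)) \<and>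
        (\<forall>y x'. lbl (gof (xof d)) \<noteq> lbl (gof x') \<longrightarrow> fb d y x' = disc (gof (xof d)) (gof x'))"
    using cf unfolding consistent_feedback_def by blast
  have ga: "gof (xof a) = j" "\<not> exc a" and gb: "gof (xof b) = i" "\<not> exc b"
    using ij(2,3) unfolding EE_def by auto
  have lij: "lbl i \<noteq> lbl j" using ij(1) unfolding SS_def by auto
  have "lab a = lbl j" using cfa[OF assms(1) ga(2)] ga(1) by simp
  moreover have "lab b = lbl i" using cfa[OF assms(2) gb(2)] gb(1) by simp
  moreover have "fb b (lab a) (xof a) = disc i j"
    using cfa[OF assms(2) gb(2)] gb(1) ga(1) lij by simp
  ultimately show ?thesis using ij lij by (auto simp: SS_def)
qed

lemma cnt_le_Fcount:
  assumes "\<omega> \<in> space (PiM UNIV (\<lambda>_::nat. D))"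
  shows "cnt (CC \<phi>) lab N \<omega> \<le> Fcount xof lab fb pos neg \<omega> N \<phi>"
proof -
  have sp: "\<omega> t \<in> space D" for t using assms by (auto simp: space_PiM)
  have "cnt (CC \<phi>) lab N \<omega> = card {k \<in> {..<N}. CC \<phi> (\<omega> (disc_start lab \<omega> k)) (\<omega> (next_mistake lab \<omega> (disc_start lab \<omega> k)))}"
    unfolding cnt_def by (simp add: sum.inter_filter[symmetric])
  also have "\<dots> \<le> card {k. k < N \<and> iter_feature xof lab fb pos neg \<omega> k = \<phi>}"
  proof (rule card_mono)
    show "finite {k. k < N \<and> iter_feature xof lab fb pos neg \<omega> k = \<phi>}" by simp
  next
    show "{k \<in> {..<N}. CC \<phi> (\<omega> (disc_start lab \<omega> k)) (\<omega> (next_mistake lab \<omega> (disc_start lab \<omega> k)))}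
       \<subseteq> {k. k < N \<and> iter_feature xof lab fb pos neg \<omega> k = \<phi>}"
    proof
      fix k assume k: "k \<in> {k \<in> {..<N}. CC \<phi> (\<omega> (disc_start lab \<omega> k)) (\<omega> (next_mistake lab \<omega> (disc_start lab \<omega> k)))}"
      then have "posf pos neg (fb (\<omega> (next_mistake lab \<omega> (disc_start lab \<omega> k))) (lab (\<omega> (disc_start lab \<omega> k))) (xof (\<omega> (disc_start lab \<omega> k)))) = \<phi>"
        using CC_feature[OF sp sp] by blast
      then show "k \<in> {k. k < N \<and> iter_feature xof lab fb pos neg \<omega> k = \<phi>}"
        using k unfolding iter_feature_def Let_def by simp
    qed
  qed
  finally show ?thesis unfolding Fcount_def .
qed

lemma W_prop:
  assumes "\<omega> \<in> space (PiM UNIV (\<lambda>_::nat. D))" "CC \<phi> (\<omega> 1) (\<omega> 2)"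
  shows "tc lab \<omega> 1 \<and> CC \<phi> (\<omega> 1) (\<omega> (next_mistake lab \<omega> 1))"
proof -
  have sp: "\<omega> t \<in> space D" for t using assms by (auto simp: space_PiM)
  have "lab (\<omega> 1) \<noteq> lab (\<omega> 2)" using CC_feature[OF sp sp assms(2)] by blast
  then have "lab (\<omega> 2) \<noteq> lab (\<omega> 1)" by metis
  then have "tc lab \<omega> 1 \<and> next_mistake lab \<omega> 1 = 2"
    unfolding ev_eq by auto
  then show ?thesis using assms(2) by simp
qed

lemma measure_W:
  "measure (PiM UNIV (\<lambda>_::nat. D)) {\<omega> \<in> space (PiM UNIV (\<lambda>_::nat. D)). CC \<phi> (\<omega> 1) (\<omega> 2)}
   = (\<Sum>p\<in>S\<phi> \<phi>. PG D xof exc gof (fst p) * PG D xof exc gof (snd p))"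
proof -
  let ?S = "PiM UNIV (\<lambda>_::nat. D)"
  interpret SP: prob_space ?S by (rule prob_space_PiM) (rule D)
  let ?A = "\<lambda>p. {\<omega> \<in> space ?S. \<omega> 1 \<in> E (snd p) \<and> \<omega> 2 \<in> E (fst p)}"
  have eq: "{\<omega> \<in> space ?S. CC \<phi> (\<omega> 1) (\<omega> 2)} = (\<Union>p\<in>S\<phi> \<phi>. ?A p)"
    unfolding CC_def by auto
  have Asets: "?A p \<in> sets ?S" if "p \<in> S\<phi> \<phi>" for p
  proof -
    from that have [measurable]: "E (snd p) \<in> sets D" "E (fst p) \<in> sets D" by (auto simp: SS_def)
    show ?thesis by measurable
  qed
  have disj: "disjoint_family_on ?A (S\<phi> \<phi>)"
    unfolding disjoint_family_on_def
  proof (intro ballI impI)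
    fix p q assume pq: "p \<in> S\<phi> \<phi>" "q \<in> S\<phi> \<phi>" "p \<noteq> q"
    show "?A p \<inter> ?A q = {}"
    proof (rule ccontr)
      assume "?A p \<inter> ?A q \<noteq> {}"
      then obtain \<omega> :: "nat \<Rightarrow> 'd" where "\<omega> 1 \<in> E (snd p)" "\<omega> 2 \<in> E (fst p)" "\<omega> 1 \<in> E (snd q)" "\<omega> 2 \<in> E (fst q)"
        by blast
      then have "snd p = snd q" "fst p = fst q" unfolding EE_def by auto
      then show False using pq(3) by (simp add: prod_eq_iff)
    qed
  qed
  have "measure ?S (\<Union>p\<in>S\<phi> \<phi>. ?A p) = (\<Sum>p\<in>S\<phi> \<phi>. measure ?S (?A p))"
    by (rule measure_finite_Union[OF SS_finite _ disj]) (use Asets in auto)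
  also have "\<dots> = (\<Sum>p\<in>S\<phi> \<phi>. PG D xof exc gof (fst p) * PG D xof exc gof (snd p))"
  proof (rule sum.cong[OF refl])
    fix p assume "p \<in> S\<phi> \<phi>"
    then have "E (snd p) \<in> sets D" "E (fst p) \<in> sets D" by (auto simp: SS_def)
    then have "measure ?S (?A p) = measure D (E (snd p)) * measure D (E (fst p))"
      by (intro measure_two[OF D])
    moreover have PGE: "PG D xof exc gof c = measure D (E c)" for c by (simp add: PG_def EE_def)
    ultimately show "measure ?S (?A p) = PG D xof exc gof (fst p) * PG D xof exc gof (snd p)"
      by (simp add: mult.commute)
  qed
  finally show ?thesis using eq by simp
qed

lemma sum_SS_beta:
  "(\<Sum>p\<in>S\<phi> \<phi>. PG D xof exc gof (fst p) * PG D xof exc gof (snd p))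
   = 2 * beta_of D xof exc comps lbl gof disc pos neg \<phi>"
proof -
  let ?P = "PG D xof exc gof"
  let ?h = "\<lambda>p. {fst p, snd p}"
  have pairs: "pairs_of comps lbl disc pos neg \<phi> = ?h ` S\<phi> \<phi>"
  proof (rule set_eqI, rule iffI)
    fix x assume "x \<in> pairs_of comps lbl disc pos neg \<phi>"
    then obtain i j where "x = {i, j}" "i \<in> comps" "j \<in> comps" "lbl i \<noteq> lbl j" "posf pos neg (disc i j) = \<phi>"
      unfolding pairs_of_def by blast
    then show "x \<in> ?h ` S\<phi> \<phi>"
      by (intro image_eqI[of _ _ "(i, j)"]) (auto simp: SS_def)
  next
    fix x assume "x \<in> ?h ` S\<phi> \<phi>"
    then obtain p where "p \<in> S\<phi> \<phi>" "x = {fst p, snd p}" by blast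
    then show "x \<in> pairs_of comps lbl disc pos neg \<phi>"
      unfolding pairs_of_def SS_def by blast
  qed
  have "(\<Sum>p\<in>S\<phi> \<phi>. ?P (fst p) * ?P (snd p)) = (\<Sum>q\<in>?h ` S\<phi> \<phi>. \<Sum>p\<in>{p. p \<in> S\<phi> \<phi> \<and> ?h p = q}. ?P (fst p) * ?P (snd p))"
    by (rule sum.image_gen[OF SS_finite])
  also have "\<dots> = (\<Sum>q\<in>?h ` S\<phi> \<phi>. 2 * (\<Prod>c\<in>q. ?P c))"
  proof (rule sum.cong[OF refl])
    fix q assume "q \<in> ?h ` S\<phi> \<phi>"
    then obtain i j where ij: "(i, j) \<in> S\<phi> \<phi>" "q = {i, j}" by auto
    have ne: "i \<noteq> j" using ij by (auto simp: SS_def)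
    have ji: "(j, i) \<in> S\<phi> \<phi>" using SS_sym[OF ij(1)] by simp
    have "{p. p \<in> S\<phi> \<phi> \<and> ?h p = q} = {(i, j), (j, i)}"
    proof (rule set_eqI)
      fix p :: "'c \<times> 'c"
      have "?h p = {i, j} \<longleftrightarrow> (fst p = i \<and> snd p = j \<or> fst p = j \<and> snd p = i)"
        by (rule doubleton_eq_iff)
      also have "\<dots> \<longleftrightarrow> p = (i, j) \<or> p = (j, i)" by (cases p) simp
      finally have "?h p = q \<longleftrightarrow> p \<in> {(i, j), (j, i)}" using ij(2) by simp
      then show "p \<in> {p. p \<in> S\<phi> \<phi> \<and> ?h p = q} \<longleftrightarrow> p \<in> {(i, j), (j, i)}"
        using ij(1) ji by blast
    qed
    then show "(\<Sum>p\<in>{p. p \<in> S\<phi> \<phi> \<and> ?h p = q}. ?P (fst p) * ?P (snd p)) = 2 * (\<Prod>c\<in>q. ?P c)"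
      using ne ij(2) by (simp add: mult.commute)
  qed
  also have "\<dots> = 2 * beta_of D xof exc comps lbl gof disc pos neg \<phi>"
    unfolding beta_of_def pairs by (simp add: sum_distrib_left)
  finally show ?thesis .
qed

lemma W_disj:
  assumes "CC \<phi> a b" "CC \<psi> a b"
  shows "\<phi> = \<psi>"
proof -
  obtain p where p: "p \<in> S\<phi> \<phi>" "a \<in> E (snd p)" "b \<in> E (fst p)"
    using assms(1) unfolding CC_def by blast
  obtain q where q: "q \<in> S\<phi> \<psi>" "a \<in> E (snd q)" "b \<in> E (fst q)"
    using assms(2) unfolding CC_def by blast
  have "snd p = snd q" "fst p = fst q" using p q unfolding EE_def by auto
  then have "p = q" by (simp add: prod_eq_iff)
  then show ?thesis using p(1) q(1) unfolding SS_def by auto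
qed


lemma normF_eq:
  "(\<Sum>\<phi>\<in>{\<phi>. Fcount xof lab fb pos neg \<omega> N \<phi> \<noteq> 0}. Fcount xof lab fb pos neg \<omega> N \<phi>) = N"
proof -
  let ?f = "iter_feature xof lab fb pos neg \<omega>"
  have set: "{\<phi>. Fcount xof lab fb pos neg \<omega> N \<phi> \<noteq> 0} = ?f ` {..<N}"
  proof (rule set_eqI)
    fix \<phi>
    have "Fcount xof lab fb pos neg \<omega> N \<phi> \<noteq> 0 \<longleftrightarrow> {k. k < N \<and> ?f k = \<phi>} \<noteq> {}"
      unfolding Fcount_def by simp
    also have "\<dots> \<longleftrightarrow> \<phi> \<in> ?f ` {..<N}" by auto
    finally show "\<phi> \<in> {\<phi>. Fcount xof lab fb pos neg \<omega> N \<phi> \<noteq> 0} \<longleftrightarrow> \<phi> \<in> ?f ` {..<N}" by simp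
  qed
  have "N = (\<Sum>k\<in>{..<N}. (1::nat))" by simp
  also have "\<dots> = (\<Sum>\<phi>\<in>?f ` {..<N}. \<Sum>k\<in>{k. k \<in> {..<N} \<and> ?f k = \<phi>}. 1)"
    by (rule sum.image_gen) simp
  also have "\<dots> = (\<Sum>\<phi>\<in>?f ` {..<N}. Fcount xof lab fb pos neg \<omega> N \<phi>)"
    unfolding Fcount_def by (intro sum.cong refl) simp
  finally show ?thesis unfolding set by simp
qed

lemma main_aux:
  fixes b :: nat and \<beta> \<delta> :: real
  assumes b: "0 < \<beta>" "\<beta> < 1" and d: "0 < \<delta>" "\<delta> < 1"
    and Nb: "real (num_iters b) \<ge> 6 * ln (1 / (2 * \<delta> * \<beta>)) / \<beta>"
  shows "\<exists>A \<in> sets (PiM UNIV (\<lambda>_::nat. D)).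
           {\<omega> \<in> space (PiM UNIV (\<lambda>_::nat. D)).
              disc_terminates lab b \<omega> \<and>
              \<not> Phi_beta Phi D xof exc comps lbl gof disc pos neg \<beta>
                  \<subseteq> Phi_hat Phi xof lab fb pos neg b \<beta> \<omega>} \<subseteq> A
           \<and> measure (PiM UNIV (\<lambda>_::nat. D)) A \<le> \<delta>"
proof -
  let ?S = "PiM UNIV (\<lambda>_::nat. D)"
  interpret SP: prob_space ?S by (rule prob_space_PiM) (rule D)
  define N where "N = num_iters b"
  define PB where "PB = Phi_beta Phi D xof exc comps lbl gof disc pos neg \<beta>"
  define W where "W \<phi> = {\<omega> \<in> space ?S. CC \<phi> (\<omega> 1) (\<omega> 2)}" for \<phi>
  define c where "c = 2 powr (\<beta> * real N)"
  define A\<phi> where "A\<phi> \<phi> = {\<omega> \<in> space ?S. 1 \<le> ennreal c * Zf (CC \<phi>) lab N \<omega>}" for \<phi>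
  have c0: "0 \<le> c" unfolding c_def by simp
  have Wsets: "W \<phi> \<in> sets ?S" for \<phi> unfolding W_def by measurable
  have mW: "measure ?S (W \<phi>) = 2 * beta_of D xof exc comps lbl gof disc pos neg \<phi>" for \<phi>
    unfolding W_def measure_W sum_SS_beta ..
  have PBb: "\<beta> \<le> beta_of D xof exc comps lbl gof disc pos neg \<phi>" if "\<phi> \<in> PB" for \<phi>
    using that unfolding PB_def Phi_beta_def by simp
  have cardb: "real (card F) * (2 * \<beta>) \<le> 1" if F: "finite F" "F \<subseteq> PB" for F
  proof -
    have disj: "disjoint_family_on W F"
      unfolding disjoint_family_on_def
    proof (intro ballI impI)
      fix \<phi> \<psi> assume "\<phi> \<in> F" "\<psi> \<in> F" "\<phi> \<noteq> \<psi>"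
      then show "W \<phi> \<inter> W \<psi> = {}" unfolding W_def using W_disj by blast
    qed
    have "real (card F) * (2 * \<beta>) = (\<Sum>\<phi>\<in>F. 2 * \<beta>)" by simp
    also have "\<dots> \<le> (\<Sum>\<phi>\<in>F. measure ?S (W \<phi>))"
      by (rule sum_mono) (use PBb F(2) mW in auto)
    also have "\<dots> = measure ?S (\<Union>\<phi>\<in>F. W \<phi>)"
      by (rule measure_finite_Union[symmetric, OF F(1) _ disj]) (use Wsets in auto)
    also have "\<dots> \<le> 1" by (rule SP.prob_le_1)
    finally show ?thesis .
  qed
  have finPB: "finite PB"
  proof (rule ccontr)
    assume "infinite PB"
    then obtain F where F: "finite F" "card F = nat \<lceil>1 / (2 * \<beta>)\<rceil> + 1" "F \<subseteq> PB"
      using infinite_arbitrarily_large by blast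
    have "real (card F) > 1 / (2 * \<beta>)" unfolding F(2) by linarith
    then have "real (card F) * (2 * \<beta>) > 1" using b by (simp add: field_simps)
    then show False using cardb[OF F(1) F(3)] by simp
  qed
  have Asets: "A\<phi> \<phi> \<in> sets ?S" for \<phi>
  proof -
    note [measurable] = Zf_meas[where D=D and lab=lab and C="CC \<phi>", OF D labm CC_pred]
    show ?thesis unfolding A\<phi>_def by measurable
  qed
  have Ab: "measure ?S (A\<phi> \<phi>) \<le> c * (1 - \<beta>) ^ N" if \<phi>: "\<phi> \<in> PB" for \<phi>
  proof -
    have Wm: "ennreal (2 * \<beta>) \<le> emeasure ?S (W \<phi>)"
      using PBb[OF \<phi>] mW[of \<phi>] b by (simp add: SP.emeasure_eq_measure)
    have Wp: "tc lab \<omega> 1 \<and> CC \<phi> (\<omega> 1) (\<omega> (next_mistake lab \<omega> 1))" if "\<omega> \<in> W \<phi>" for \<omega>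
      using that W_prop unfolding W_def by blast
    have "emeasure ?S (A\<phi> \<phi>) \<le> ennreal c * (\<integral>\<^sup>+ \<omega>. Zf (CC \<phi>) lab N \<omega> \<partial>?S)"
      unfolding A\<phi>_def by (rule Zf_tail[where D=D and lab=lab and C="CC \<phi>", OF D labm CC_pred])
    also have "\<dots> \<le> ennreal c * ennreal ((1 - \<beta>) ^ N)"
      by (intro mult_left_mono Zf_int_bound[where D=D and lab=lab and C="CC \<phi>", OF D labm CC_pred Wsets Wp Wm])
         (use b in auto)
    also have "\<dots> = ennreal (c * (1 - \<beta>) ^ N)"
      using c0 b by (simp add: ennreal_mult[symmetric])
    finally have "ennreal (measure ?S (A\<phi> \<phi>)) \<le> ennreal (c * (1 - \<beta>) ^ N)"
      by (simp add: SP.emeasure_eq_measure)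
    then show ?thesis using c0 b by (subst (asm) ennreal_le_iff) auto
  qed
  have contain: "{\<omega> \<in> space ?S. disc_terminates lab b \<omega> \<and> \<not> PB \<subseteq> Phi_hat Phi xof lab fb pos neg b \<beta> \<omega>}
      \<subseteq> (\<Union>\<phi>\<in>PB. A\<phi> \<phi>)"
  proof
    fix \<omega> assume \<omega>: "\<omega> \<in> {\<omega> \<in> space ?S. disc_terminates lab b \<omega> \<and> \<not> PB \<subseteq> Phi_hat Phi xof lab fb pos neg b \<beta> \<omega>}"
    then have sp: "\<omega> \<in> space ?S" and dt: "disc_terminates lab b \<omega>" by auto
    from \<omega> obtain \<phi> where \<phi>: "\<phi> \<in> PB" "\<phi> \<notin> Phi_hat Phi xof lab fb pos neg b \<beta> \<omega>" by auto
    have "\<phi> \<in> Phi" using \<phi>(1) unfolding PB_def Phi_beta_def by simp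
    have hat: "Phi_hat Phi xof lab fb pos neg b \<beta> \<omega> = {\<psi>\<in>Phi. real (Fcount xof lab fb pos neg \<omega> N \<psi>) \<ge> \<beta> * real N}"
      unfolding Phi_hat_def Let_def N_def[symmetric] normF_eq ..
    then have lt: "real (Fcount xof lab fb pos neg \<omega> N \<phi>) < \<beta> * real N"
      using \<phi>(2) \<open>\<phi> \<in> Phi\<close> by auto
    have trm: "trm lab N \<omega>" using dt unfolding disc_terminates_def trm_def tc_def N_def by blast
    have cl: "real (cnt (CC \<phi>) lab N \<omega>) < \<beta> * real N"
      using cnt_le_Fcount[OF sp, of \<phi> N] lt by linarith
    have "2 ^ cnt (CC \<phi>) lab N \<omega> = 2 powr real (cnt (CC \<phi>) lab N \<omega>)"
      by (simp add: powr_realpow)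
    also have "\<dots> \<le> c" unfolding c_def by (rule powr_mono) (use cl in auto)
    finally have "1 \<le> c * (1/2) ^ cnt (CC \<phi>) lab N \<omega>"
      by (simp add: field_simps power_divide)
    then have "1 \<le> ennreal c * Zf (CC \<phi>) lab N \<omega>"
      using trm c0 unfolding Zf_def by (simp add: ennreal_mult[symmetric])
    then show "\<omega> \<in> (\<Union>\<phi>\<in>PB. A\<phi> \<phi>)" using \<phi>(1) sp unfolding A\<phi>_def by blast
  qed
  have "measure ?S (\<Union>\<phi>\<in>PB. A\<phi> \<phi>) \<le> (\<Sum>\<phi>\<in>PB. measure ?S (A\<phi> \<phi>))"
    by (rule SP.finite_measure_subadditive_finite[OF finPB]) (use Asets in auto)
  also have "\<dots> \<le> (\<Sum>\<phi>\<in>PB. c * (1 - \<beta>) ^ N)" by (rule sum_mono) (rule Ab)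
  also have "\<dots> = real (card PB) * (2 powr (\<beta> * real N) * (1 - \<beta>) ^ N)" by (simp add: c_def)
  also have "\<dots> \<le> \<delta>"
    by (rule numeric_bound) (use b d Nb cardb[OF finPB] in \<open>auto simp: N_def\<close>)
  finally have "measure ?S (\<Union>\<phi>\<in>PB. A\<phi> \<phi>) \<le> \<delta>" .
  moreover have "(\<Union>\<phi>\<in>PB. A\<phi> \<phi>) \<in> sets ?S" using Asets finPB by auto
  ultimately show ?thesis using contain unfolding PB_def by blast
qed

end

theorem lemma7:
  fixes D :: "'d measure"
    and xof :: "'d \<Rightarrow> 'x" and exc :: "'d \<Rightarrow> bool" and lab :: "'d \<Rightarrow> 'y::finite"
    and fb :: "'d \<Rightarrow> 'y \<Rightarrow> 'x \<Rightarrow> 'f"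
    and Phi :: "'f set" and feat :: "'f \<Rightarrow> 'x \<Rightarrow> bool" and neg :: "'f \<Rightarrow> 'f" and pos :: "'f \<Rightarrow> bool"
    and comps :: "'c set" and m :: nat and compset :: "'c \<Rightarrow> 'x set" and lbl :: "'c \<Rightarrow> 'y"
    and gof :: "'x \<Rightarrow> 'c" and disc :: "'c \<Rightarrow> 'c \<Rightarrow> 'f"
    and b :: nat and \<beta> \<delta> :: real
  assumes "prob_space D"
    and "feature_system Phi feat neg pos"
    and "representation Phi feat neg comps m compset lbl gof disc"
    and "consistent_feedback D xof exc lab fb lbl gof disc"
    and "{d \<in> space D. exc d} \<in> sets D"
    and "lab \<in> D \<rightarrow>\<^sub>M count_space UNIV"
    and "\<And>c. c \<in> comps \<Longrightarrow> {d \<in> space D. gof (xof d) = c \<and> \<not> exc d} \<in> sets D"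
    and "0 < \<beta>" and "\<beta> < 1" and "0 < \<delta>" and "\<delta> < 1"
    and "real (num_iters b) \<ge> 6 * ln (1 / (2 * \<delta> * \<beta>)) / \<beta>"
  shows "\<exists>A \<in> sets (PiM UNIV (\<lambda>_::nat. D)).
           {\<omega> \<in> space (PiM UNIV (\<lambda>_::nat. D)).
              disc_terminates lab b \<omega> \<and>
              \<not> Phi_beta Phi D xof exc comps lbl gof disc pos neg \<beta>
                  \<subseteq> Phi_hat Phi xof lab fb pos neg b \<beta> \<omega>} \<subseteq> A
           \<and> measure (PiM UNIV (\<lambda>_::nat. D)) A \<le> \<delta>"
  by (rule main_aux[OF assms(1) assms(2) assms(3) assms(4) assms(6) assms(7)
        assms(8) assms(9) assms(10) assms(11) assms(12)])

end
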